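(* Let $m\ge3$, let $(f,\Gamma)$ be an elliptic data for conformal metrics and let $c\le0$ be a constant. Then there is no conformal metric $g=e^{2\rho}g_0$ on $\overline{\mathbb{S}^m_+}$ with $\rho\in C^{2,\alpha}(\overline{\mathbb{S}^m_+})$ such that $$f(\lambda(g))=0\ \text{ (with }\lambda(g)\in\overline\Gamma)\ \text{in }\overline{\mathbb{S}^m_+},\qquad h(g)=c\ \text{on }\partial\mathbb{S}^m_+ .$$
   Context: $\mathbb{S}^m\subset\mathbb{R}^{m+1}$ is the unit sphere with round metric $g_0$, $\nabla$ its gradient; $\mathbb{S}^m_+=\{x_{m+1}>0\}$. For $g=e^{2\rho}g_0$, $\lambda(g)=(\lambda_1,\dots,\lambda_m)$ are the eigenvalues of $g^{-1}\mathrm{Sch}(g)$, $\mathrm{Sch}(g)=\frac{1}{m-2}\big(\mathrm{Ric}(g)-\frac{R(g)}{2(m-1)}g\big)$. Let $\Gamma_m=\{x:x_i>0\ \forall i\}$, $\Gamma_1=\{x:\sum x_i>0\}$. Elliptic data: $(f,\Gamma)$ with $\Gamma\subset\mathbb{R}^m$ an open convex symmetric cone, $\Gamma_m\subset\Gamma\subset\Gamma_1$, and $f\in C^0(\overline\Gamma)\cap C^1(\Gamma)$ symmetric, $f=0$ on $\partial\Gamma$, $f>0$ on $\Gamma$, homogeneous of degree 1, $\nabla f\in\Gamma_m$ on $\Gamma$. Mean curvature of $\partial\mathbb{S}^m_+$: $h(g)=-e^{-\rho}\langle\nabla\rho,e_{m+1}\rangle$, the normalized mean curvature with respect to $g$ and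 the unit normal $e^{-\rho}e_{m+1}$ pointing into $\mathbb{S}^m_+$ (with this convention the flat unit ball, viewed conformally on $\mathbb{S}^m_+$, has $h=1$). *)

theory Defs
  imports "HOL-Analysis.Analysis"
begin

text \<open>Ambient space R^(m+1) is rendered as (real^'m) \<times> real; the last
  coordinate (snd) is x_(m+1), and e_(m+1) = (0,1).\<close>

type_synonym 'm pt = "(real^'m) \<times> real"

definition e_last :: "('m::finite) pt" where
  "e_last = (0, 1)"

definition hemi :: "('m::finite) pt set" where
  "hemi = {x. norm x = 1 \<and> snd x > 0}"

definition hemi_bdry :: "('m::finite) pt set" where
  "hemi_bdry = {x. norm x = 1 \<and> snd x = 0}"

text \<open>rho has an extension to an open neighbourhood U of S which is C^2, with
  gradient field G and Hessian H, whose second derivative is alpha-Hoelder on S.\<close>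
definition C2_alpha_rep ::
  "real \<Rightarrow> 'm pt set \<Rightarrow> 'm pt set \<Rightarrow> ('m::finite pt \<Rightarrow> real) \<Rightarrow>
   ('m pt \<Rightarrow> 'm pt) \<Rightarrow> ('m pt \<Rightarrow> 'm pt \<Rightarrow> 'm pt) \<Rightarrow> bool" where
  "C2_alpha_rep \<alpha> S U \<rho> G H \<longleftrightarrow>
     open U \<and> S \<subseteq> U \<and>
     (\<forall>x\<in>U. (\<rho> has_derivative (\<lambda>v. G x \<bullet> v)) (at x)) \<and>
     (\<forall>x\<in>U. (G has_derivative H x) (at x)) \<and>
     (\<forall>v. continuous_on U (\<lambda>x. H x v)) \<and>
     (\<exists>L. \<forall>x\<in>S. \<forall>y\<in>S. \<forall>v. norm (H x v - H y v) \<le> L * (dist x y) powr \<alpha> * norm v)"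

text \<open>Round-sphere gradient and covariant Hessian of the restriction to S^m.\<close>
definition sph_grad :: "('m::finite pt \<Rightarrow> 'm pt) \<Rightarrow> 'm pt \<Rightarrow> 'm pt" where
  "sph_grad G x = G x - (G x \<bullet> x) *\<^sub>R x"

definition sph_hess ::
  "('m::finite pt \<Rightarrow> 'm pt) \<Rightarrow> ('m pt \<Rightarrow> 'm pt \<Rightarrow> 'm pt) \<Rightarrow> 'm pt \<Rightarrow> 'm pt \<Rightarrow> 'm pt \<Rightarrow> real" where
  "sph_hess G H x v w = H x v \<bullet> w - (G x \<bullet> x) * (v \<bullet> w)"

text \<open>Schouten tensor of g = e^(2 rho) g_0 on S^m (Sch(g_0) = g_0/2):
  Sch(g) = Sch(g_0) - Hess rho + d rho (x) d rho - |d rho|^2 g_0 / 2.\<close>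
definition schouten ::
  "('m::finite pt \<Rightarrow> 'm pt) \<Rightarrow> ('m pt \<Rightarrow> 'm pt \<Rightarrow> 'm pt) \<Rightarrow> 'm pt \<Rightarrow> 'm pt \<Rightarrow> 'm pt \<Rightarrow> real" where
  "schouten G H x v w =
     (1/2) * (v \<bullet> w) - sph_hess G H x v w
     + (sph_grad G x \<bullet> v) * (sph_grad G x \<bullet> w)
     - (1/2) * (norm (sph_grad G x))\<^sup>2 * (v \<bullet> w)"

text \<open>lam is a vector of the eigenvalues (with multiplicity) of g^{-1} Sch(g) at x:
  there is a g_0-orthonormal basis b of T_x S^m with Sch(g)(b i, w) = lam_i g(b i, w).\<close>
definition sch_eigs ::
  "('m::finite pt \<Rightarrow> real) \<Rightarrow> ('m pt \<Rightarrow> 'm pt) \<Rightarrow> ('m pt \<Rightarrow> 'm pt \<Rightarrow> 'm pt) \<Rightarrow> 'm pt \<Rightarrow> real^'m \<Rightarrow> bool" where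
  "sch_eigs \<rho> G H x lam \<longleftrightarrow>
     (\<exists>b :: 'm \<Rightarrow> 'm pt.
        (\<forall>i. b i \<bullet> x = 0) \<and>
        (\<forall>i j. b i \<bullet> b j = (if i = j then 1 else 0)) \<and>
        (\<forall>i. \<forall>w. w \<bullet> x = 0 \<longrightarrow>
            schouten G H x (b i) w = lam $ i * (exp (2 * \<rho> x) * (b i \<bullet> w))))"

definition mean_curv :: "('m::finite pt \<Rightarrow> real) \<Rightarrow> ('m pt \<Rightarrow> 'm pt) \<Rightarrow> 'm pt \<Rightarrow> real" where
  "mean_curv \<rho> G x = - exp (- \<rho> x) * (sph_grad G x \<bullet> e_last)"

definition Gamma_m :: "(real^'m::finite) set" where
  "Gamma_m = {x. \<forall>i. x $ i > 0}"

definition Gamma_1 :: "(real^'m::finite) set" where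
  "Gamma_1 = {x. (\<Sum>i\<in>UNIV. x $ i) > 0}"

definition perm_vec :: "('m::finite \<Rightarrow> 'm) \<Rightarrow> real^'m \<Rightarrow> real^'m" where
  "perm_vec \<sigma> x = (\<chi> i. x $ \<sigma> i)"

definition elliptic_data :: "(real^'m::finite \<Rightarrow> real) \<Rightarrow> (real^'m) set \<Rightarrow> bool" where
  "elliptic_data f \<Gamma> \<longleftrightarrow>
     open \<Gamma> \<and> convex \<Gamma> \<and>
     (\<forall>x\<in>\<Gamma>. \<forall>t>0. t *\<^sub>R x \<in> \<Gamma>) \<and>
     (\<forall>\<sigma> x. \<sigma> permutes UNIV \<longrightarrow> x \<in> \<Gamma> \<longrightarrow> perm_vec \<sigma> x \<in> \<Gamma>) \<and>
     Gamma_m \<subseteq> \<Gamma> \<and> \<Gamma> \<subseteq> Gamma_1 \<and>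
     continuous_on (closure \<Gamma>) f \<and>
     (\<exists>Df. (\<forall>x\<in>\<Gamma>. (f has_derivative (\<lambda>v. Df x \<bullet> v)) (at x)) \<and>
           continuous_on \<Gamma> Df \<and> (\<forall>x\<in>\<Gamma>. Df x \<in> Gamma_m)) \<and>
     (\<forall>\<sigma> x. \<sigma> permutes UNIV \<longrightarrow> x \<in> closure \<Gamma> \<longrightarrow> f (perm_vec \<sigma> x) = f x) \<and>
     (\<forall>x\<in>frontier \<Gamma>. f x = 0) \<and>
     (\<forall>x\<in>\<Gamma>. f x > 0) \<and>
     (\<forall>x\<in>\<Gamma>. \<forall>t>0. f (t *\<^sub>R x) = t * f x)"

end

theory Submission
  imports Defs
begin

lemma first_order:
  fixes \<phi> :: "real \<Rightarrow> real"
  assumes "(\<phi> has_real_derivative D) (at 0)" "d > 0" "\<forall>t. 0 < t \<and> t < d \<longrightarrow> \<phi> t \<le> \<phi> 0"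
  shows "D \<le> 0"
proof (rule ccontr)
  assume "\<not> D \<le> 0"
  then obtain d' where d': "d' > 0" "\<forall>h>0. h < d' \<longrightarrow> \<phi> 0 < \<phi> (0 + h)"
    using DERIV_pos_inc_right[OF assms(1)] by auto
  have "\<phi> 0 < \<phi> (min d d' / 2)" using d' assms(2) by auto
  moreover have "\<phi> (min d d' / 2) \<le> \<phi> 0" using assms(2,3) d'(1) by auto
  ultimately show False by simp
qed

lemma second_order:
  fixes \<phi> \<phi>' :: "real \<Rightarrow> real"
  assumes "\<And>t. 0 \<le> t \<Longrightarrow> t < d \<Longrightarrow> (\<phi> has_real_derivative \<phi>' t) (at t)"
    and "(\<phi>' has_real_derivative D) (at 0)" "d > 0" "\<forall>t. 0 < t \<and> t < d \<longrightarrow> \<phi> t \<le> \<phi> 0"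
    and "\<phi>' 0 = 0"
  shows "D \<le> 0"
proof (rule ccontr)
  assume "\<not> D \<le> 0"
  then obtain d' where d': "d' > 0" "\<forall>h>0. h < d' \<longrightarrow> \<phi>' 0 < \<phi>' (0 + h)"
    using DERIV_pos_inc_right[OF assms(2)] by auto
  define h where "h = min d d' / 2"
  have h: "0 < h" "h < d" "h < d'" using d' assms(3) by (auto simp: h_def)
  obtain z where z: "0 < z" "z < h" "\<phi> h - \<phi> 0 = (h - 0) * \<phi>' z"
    using MVT2[of 0 h \<phi> \<phi>'] h assms(1) by auto
  have "\<phi>' z > 0" using d' z h assms(5) by auto
  then have "h * \<phi>' z > 0" using h by simp
  then have "\<phi> h > \<phi> 0" using z by simp
  moreover have "\<phi> h \<le> \<phi> 0" using assms(4) h by auto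
  ultimately show False by simp
qed

lemma curve_deriv:
  fixes x v :: "'m::finite pt"
  shows "((\<lambda>t. cos t *\<^sub>R x + sin t *\<^sub>R v) has_derivative (\<lambda>h. h *\<^sub>R (cos t *\<^sub>R v - sin t *\<^sub>R x))) (at t)"
  by (auto intro!: derivative_eq_intros simp: algebra_simps)

lemma curve_deriv2:
  fixes x v :: "'m::finite pt"
  shows "((\<lambda>t. cos t *\<^sub>R v - sin t *\<^sub>R x) has_derivative (\<lambda>h. h *\<^sub>R (- (cos t *\<^sub>R x + sin t *\<^sub>R v)))) (at t)"
  by (auto intro!: derivative_eq_intros simp: algebra_simps)

lemma curve_norm:
  fixes x v :: "'m::finite pt"
  assumes "norm x = 1" "norm v = 1" "v \<bullet> x = 0"
  shows "norm (cos t *\<^sub>R x + sin t *\<^sub>R v) = 1"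
proof -
  have xx: "x \<bullet> x = 1" "v \<bullet> v = 1" using assms by (simp_all add: power2_norm_eq_inner[symmetric])
  have "(cos t *\<^sub>R x + sin t *\<^sub>R v) \<bullet> (cos t *\<^sub>R x + sin t *\<^sub>R v) = (cos t)^2 + (sin t)^2"
    using xx assms(3) by (simp add: inner_add_left inner_add_right inner_commute power2_eq_square)
  then show ?thesis by (simp add: norm_eq_sqrt_inner)
qed

lemma phi_deriv:
  fixes x v :: "'m::finite pt" and \<rho> :: "'m pt \<Rightarrow> real"
  assumes "(\<rho> has_derivative (\<lambda>w. G y \<bullet> w)) (at y)"
    and "y = cos t *\<^sub>R x + sin t *\<^sub>R v"
  shows "((\<lambda>t. \<rho> (cos t *\<^sub>R x + sin t *\<^sub>R v)) has_real_derivative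
           (G (cos t *\<^sub>R x + sin t *\<^sub>R v) \<bullet> (cos t *\<^sub>R v - sin t *\<^sub>R x))) (at t)"
proof -
  have "((\<rho> \<circ> (\<lambda>t. cos t *\<^sub>R x + sin t *\<^sub>R v)) has_derivative
      ((\<lambda>w. G y \<bullet> w) \<circ> (\<lambda>h. h *\<^sub>R (cos t *\<^sub>R v - sin t *\<^sub>R x)))) (at t)"
    using diff_chain_at[OF curve_deriv] assms by blast
  moreover have "(\<lambda>h. h * (G y \<bullet> (cos t *\<^sub>R v - sin t *\<^sub>R x))) = (*) (G y \<bullet> (cos t *\<^sub>R v - sin t *\<^sub>R x))"
    by (rule ext) simp
  ultimately show ?thesis using assms(2)
    by (simp add: has_field_derivative_def o_def)
qed

lemma phi_deriv2:
  fixes x v :: "'m::finite pt"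
  assumes "(G has_derivative H x) (at x)"
  shows "((\<lambda>t. G (cos t *\<^sub>R x + sin t *\<^sub>R v) \<bullet> (cos t *\<^sub>R v - sin t *\<^sub>R x)) has_real_derivative
           (H x v \<bullet> v - G x \<bullet> x)) (at 0)"
proof -
  have lin: "linear (H x)" using assms has_derivative_linear by blast
  have g: "((G \<circ> (\<lambda>t. cos t *\<^sub>R x + sin t *\<^sub>R v)) has_derivative
      (H x \<circ> (\<lambda>h. h *\<^sub>R (cos 0 *\<^sub>R v - sin 0 *\<^sub>R x)))) (at 0)"
  proof -
    have a: "(G has_derivative H x) (at (cos 0 *\<^sub>R x + sin 0 *\<^sub>R v))" using assms by simp
    show ?thesis using diff_chain_at[OF curve_deriv a] .
  qed
  have "((\<lambda>t. (G \<circ> (\<lambda>t. cos t *\<^sub>R x + sin t *\<^sub>R v)) t \<bullet> (cos t *\<^sub>R v - sin t *\<^sub>R x)) has_derivative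
      (\<lambda>h. (G \<circ> (\<lambda>t. cos t *\<^sub>R x + sin t *\<^sub>R v)) 0 \<bullet> (h *\<^sub>R (- (cos 0 *\<^sub>R x + sin 0 *\<^sub>R v)))
        + (H x \<circ> (\<lambda>h. h *\<^sub>R (cos 0 *\<^sub>R v - sin 0 *\<^sub>R x))) h \<bullet> (cos 0 *\<^sub>R v - sin 0 *\<^sub>R x))) (at 0)"
    by (rule has_derivative_inner[OF g curve_deriv2])
  moreover have "(\<lambda>h. (G \<circ> (\<lambda>t. cos t *\<^sub>R x + sin t *\<^sub>R v)) 0 \<bullet> (h *\<^sub>R (- (cos 0 *\<^sub>R x + sin 0 *\<^sub>R v)))
        + (H x \<circ> (\<lambda>h. h *\<^sub>R (cos 0 *\<^sub>R v - sin 0 *\<^sub>R x))) h \<bullet> (cos 0 *\<^sub>R v - sin 0 *\<^sub>R x))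
      = (\<lambda>h. (H x v \<bullet> v - G x \<bullet> x) * h)"
    using linear_scale[OF lin] by (auto simp: algebra_simps)
  ultimately show ?thesis by (simp add: has_field_derivative_def o_def)
qed

lemma closure_hemi: "closure (hemi :: 'm::finite pt set) = {y. norm y = 1 \<and> snd y \<ge> 0}"
proof
  have cl: "closed {y :: 'm pt. norm y = 1 \<and> snd y \<ge> 0}"
    by (intro closed_Collect_conj closed_Collect_eq closed_Collect_le) (auto intro: continuous_intros)
  show "closure hemi \<subseteq> {y :: 'm pt. norm y = 1 \<and> snd y \<ge> 0}"
    by (rule closure_minimal[OF _ cl]) (auto simp: hemi_def)
next
  show "{y :: 'm pt. norm y = 1 \<and> snd y \<ge> 0} \<subseteq> closure hemi"
  proof
    fix y :: "'m pt" assume y: "y \<in> {y. norm y = 1 \<and> snd y \<ge> 0}"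
    show "y \<in> closure hemi"
    proof (cases "snd y > 0")
      case True then have "y \<in> hemi" using y by (auto simp: hemi_def)
      then show ?thesis using closure_subset by blast
    next
      case False
      then have sy: "snd y = 0" using y by auto
      define e :: "'m pt" where "e = (0, 1)"
      have en: "norm e = 1" by (simp add: e_def)
      have ey: "e \<bullet> y = 0" using sy by (simp add: e_def inner_prod_def)
      have ev: "eventually (\<lambda>s. cos s *\<^sub>R y + sin s *\<^sub>R e \<in> hemi) (at_right (0::real))"
        unfolding eventually_at_right_field
      proof (intro exI[of _ 1] conjI allI impI)
        fix s :: real assume s: "0 < s" "s < 1"
        have "sin s > 0" using s pi_gt3 by (intro sin_gt_zero) auto
        then show "cos s *\<^sub>R y + sin s *\<^sub>R e \<in> hemi"
          using curve_norm[of y e s] y en ey sy by (auto simp: hemi_def e_def)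
      qed simp
      have lim: "((\<lambda>s. cos s *\<^sub>R y + sin s *\<^sub>R e) \<longlongrightarrow> cos 0 *\<^sub>R y + sin 0 *\<^sub>R e) (at_right (0::real))"
        by (intro tendsto_intros)
      show ?thesis
        using Lim_in_closed_set[OF closed_closure eventually_mono[OF ev closure_subset[THEN subsetD]] trivial_limit_at_right_real lim]
        by simp
    qed
  qed
qed

lemma max_cond:
  fixes x v :: "'m::finite pt" and \<rho> :: "'m pt \<Rightarrow> real"
  assumes U: "open U" "{y. norm y = 1 \<and> snd y \<ge> 0} \<subseteq> U"
    and dr: "\<forall>y\<in>U. (\<rho> has_derivative (\<lambda>w. G y \<bullet> w)) (at y)"
    and dG: "\<forall>y\<in>U. (G has_derivative H y) (at y)"
    and x: "norm x = 1" "snd x \<ge> 0"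
    and mx: "\<forall>y. norm y = 1 \<and> snd y \<ge> 0 \<longrightarrow> \<rho> y \<le> \<rho> x"
    and v: "v \<bullet> x = 0" "norm v = 1" "snd x > 0 \<or> snd v \<ge> 0"
  shows "G x \<bullet> v \<le> 0 \<and> (G x \<bullet> v = 0 \<longrightarrow> H x v \<bullet> v - G x \<bullet> x \<le> 0)"
proof -
  define \<gamma> where "\<gamma> = (\<lambda>t::real. cos t *\<^sub>R x + sin t *\<^sub>R v)"
  have \<gamma>0: "\<gamma> 0 = x" by (simp add: \<gamma>_def)
  have xU: "x \<in> U" using U x by auto
  have lim: "(\<gamma> \<longlongrightarrow> x) (at 0)"
  proof -
    have "(\<gamma> \<longlongrightarrow> cos 0 *\<^sub>R x + sin 0 *\<^sub>R v) (at 0)" unfolding \<gamma>_def by (intro tendsto_intros)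
    then show ?thesis by simp
  qed
  obtain d1 where d1: "d1 > 0" "\<forall>t. \<bar>t\<bar> < d1 \<longrightarrow> \<gamma> t \<in> U"
  proof -
    have "eventually (\<lambda>t. \<gamma> t \<in> U) (at 0)" by (rule topological_tendstoD[OF lim U(1) xU])
    then obtain d where d: "d > 0" "\<forall>t. t \<noteq> 0 \<and> dist t 0 < d \<longrightarrow> \<gamma> t \<in> U"
      unfolding eventually_at by auto
    have "\<forall>t. \<bar>t\<bar> < d \<longrightarrow> \<gamma> t \<in> U"
      using d xU \<gamma>0 by (metis dist_real_def diff_zero)
    then show ?thesis using that d by blast
  qed
  have snd\<gamma>: "\<And>t. snd (\<gamma> t) = cos t * snd x + sin t * snd v" by (simp add: \<gamma>_def)
  obtain d2 where d2: "d2 > 0" "\<forall>t. 0 < t \<and> t < d2 \<longrightarrow> snd (\<gamma> t) \<ge> 0"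
  proof (cases "snd x > 0")
    case True
    have op: "open {y :: 'm pt. snd y > 0}" by (intro open_Collect_less) (auto intro: continuous_intros)
    have "eventually (\<lambda>t. \<gamma> t \<in> {y. snd y > 0}) (at 0)" by (rule topological_tendstoD[OF lim op]) (use True in simp)
    then obtain d where d: "d > 0" "\<forall>t. t \<noteq> 0 \<and> dist t 0 < d \<longrightarrow> snd (\<gamma> t) > 0"
      unfolding eventually_at by auto
    have "\<forall>t. 0 < t \<and> t < d \<longrightarrow> snd (\<gamma> t) \<ge> 0"
      using d by (auto simp: dist_real_def intro: less_imp_le)
    then show ?thesis using that d by blast
  next
    case False
    then have sv: "snd v \<ge> 0" using v by auto
    have "\<forall>t. 0 < t \<and> t < 1 \<longrightarrow> snd (\<gamma> t) \<ge> 0"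
    proof (intro allI impI)
      fix t :: real assume t: "0 < t \<and> t < 1"
      have "sin t > 0" using t pi_gt3 by (intro sin_gt_zero) auto
      moreover have "cos t > 0" using t pi_gt3 by (intro cos_gt_zero) auto
      ultimately show "snd (\<gamma> t) \<ge> 0" using x sv snd\<gamma>[of t] by simp
    qed
    then show ?thesis using that[of 1] by simp
  qed
  define d where "d = min d1 d2"
  have d: "d > 0" using d1 d2 by (simp add: d_def)
  have le: "\<forall>t. 0 < t \<and> t < d \<longrightarrow> \<rho> (\<gamma> t) \<le> \<rho> (\<gamma> 0)"
  proof (intro allI impI)
    fix t assume t: "0 < t \<and> t < d"
    have "norm (\<gamma> t) = 1" unfolding \<gamma>_def by (rule curve_norm) (use x v in auto)
    moreover have "snd (\<gamma> t) \<ge> 0" using d2 t by (auto simp: d_def)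
    ultimately have "\<rho> (\<gamma> t) \<le> \<rho> x" using mx by blast
    then show "\<rho> (\<gamma> t) \<le> \<rho> (\<gamma> 0)" using \<gamma>0 by simp
  qed
  have der: "\<And>t. 0 \<le> t \<Longrightarrow> t < d \<Longrightarrow>
      ((\<lambda>t. \<rho> (\<gamma> t)) has_real_derivative (G (\<gamma> t) \<bullet> (cos t *\<^sub>R v - sin t *\<^sub>R x))) (at t)"
  proof -
    fix t :: real assume t: "0 \<le> t" "t < d"
    have "\<gamma> t \<in> U" using d1 t by (auto simp: d_def)
    then show "((\<lambda>t. \<rho> (\<gamma> t)) has_real_derivative (G (\<gamma> t) \<bullet> (cos t *\<^sub>R v - sin t *\<^sub>R x))) (at t)"
      unfolding \<gamma>_def using dr by (intro phi_deriv) auto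
  qed
  have D1: "((\<lambda>t. \<rho> (\<gamma> t)) has_real_derivative (G x \<bullet> v)) (at 0)"
    using der[of 0] d \<gamma>0 by simp
  have first: "G x \<bullet> v \<le> 0"
    by (rule first_order[OF D1 d]) (use le in simp)
  have D2: "((\<lambda>t. G (\<gamma> t) \<bullet> (cos t *\<^sub>R v - sin t *\<^sub>R x)) has_real_derivative (H x v \<bullet> v - G x \<bullet> x)) (at 0)"
    unfolding \<gamma>_def by (rule phi_deriv2) (use dG xU in auto)
  have "G x \<bullet> v = 0 \<longrightarrow> H x v \<bullet> v - G x \<bullet> x \<le> 0"
  proof
    assume g0: "G x \<bullet> v = 0"
    show "H x v \<bullet> v - G x \<bullet> x \<le> 0"
      by (rule second_order[OF der D2 d]) (use le g0 \<gamma>0 in simp_all)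
  qed
  with first show ?thesis by blast
qed

lemma hess_nonpos:
  fixes x v :: "'m::finite pt" and \<rho> :: "'m pt \<Rightarrow> real"
  assumes U: "open U" "{y. norm y = 1 \<and> snd y \<ge> 0} \<subseteq> U"
    and dr: "\<forall>y\<in>U. (\<rho> has_derivative (\<lambda>w. G y \<bullet> w)) (at y)"
    and dG: "\<forall>y\<in>U. (G has_derivative H y) (at y)"
    and x: "norm x = 1" "snd x \<ge> 0"
    and mx: "\<forall>y. norm y = 1 \<and> snd y \<ge> 0 \<longrightarrow> \<rho> y \<le> \<rho> x"
    and g0: "sph_grad G x = 0"
    and v: "v \<bullet> x = 0" "norm v = 1"
  shows "H x v \<bullet> v - G x \<bullet> x \<le> 0"
proof -
  have Gx: "G x = (G x \<bullet> x) *\<^sub>R x" using g0 by (simp add: sph_grad_def)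
  have Gv: "G x \<bullet> w = 0" if "w \<bullet> x = 0" for w
    using that by (subst Gx) (simp add: inner_commute)
  have xU: "x \<in> U" using U x by auto
  have lin: "linear (H x)" using dG xU has_derivative_linear by blast
  show ?thesis
  proof (cases "snd x > 0 \<or> snd v \<ge> 0")
    case True
    then show ?thesis using max_cond[OF U dr dG x mx v True] Gv[OF v(1)] by simp
  next
    case False
    then have "snd (- v) \<ge> 0" by simp
    then have "H x (-v) \<bullet> (-v) - G x \<bullet> x \<le> 0"
      using max_cond[OF U dr dG x mx, of "-v"] Gv[of "-v"] v by simp
    moreover have "H x (-v) = - H x v" using linear_neg[OF lin] .
    ultimately show ?thesis by simp
  qed
qed

theorem mainTheorem10:
  fixes f :: "real^'m::finite \<Rightarrow> real" and \<Gamma> :: "(real^'m) set"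
    and c \<alpha> :: real and U :: "'m pt set"
    and \<rho> :: "'m pt \<Rightarrow> real" and G :: "'m pt \<Rightarrow> 'm pt" and H :: "'m pt \<Rightarrow> 'm pt \<Rightarrow> 'm pt"
  assumes "CARD('m) \<ge> 3"
    and "elliptic_data f \<Gamma>"
    and "c \<le> 0"
    and "0 < \<alpha>" and "\<alpha> < 1"
    and "C2_alpha_rep \<alpha> (closure hemi) U \<rho> G H"
  shows "\<not> ((\<forall>x\<in>closure hemi. \<exists>lam. sch_eigs \<rho> G H x lam \<and> lam \<in> closure \<Gamma> \<and> f lam = 0)
           \<and> (\<forall>x\<in>hemi_bdry. mean_curv \<rho> G x = c))"
proof
  assume P: "(\<forall>x\<in>closure hemi. \<exists>lam. sch_eigs \<rho> G H x lam \<and> lam \<in> closure \<Gamma> \<and> f lam = 0)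
           \<and> (\<forall>x\<in>hemi_bdry. mean_curv \<rho> G x = c)"
  have U: "open U" "{y :: 'm pt. norm y = 1 \<and> snd y \<ge> 0} \<subseteq> U"
    and dr: "\<forall>y\<in>U. (\<rho> has_derivative (\<lambda>w. G y \<bullet> w)) (at y)"
    and dG: "\<forall>y\<in>U. (G has_derivative H y) (at y)"
    using assms(6) by (auto simp: C2_alpha_rep_def closure_hemi)
  have ed: "Gamma_m \<subseteq> \<Gamma>" "\<forall>x\<in>\<Gamma>. f x > 0"
    using assms(2) by (auto simp: elliptic_data_def)
  have comp: "compact (closure (hemi :: 'm pt set))"
  proof -
    have "bounded (hemi :: 'm pt set)" unfolding bounded_iff hemi_def by auto
    then show ?thesis by (simp add: compact_closure)
  qed
  have ne: "closure (hemi :: 'm pt set) \<noteq> {}"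
  proof -
    have "((0, 1) :: 'm pt) \<in> hemi" by (simp add: hemi_def)
    then show ?thesis using closure_subset by blast
  qed
  have cont: "continuous_on (closure hemi) \<rho>"
  proof (rule continuous_at_imp_continuous_on, rule ballI)
    fix y :: "'m pt" assume "y \<in> closure hemi"
    then have "y \<in> U" using U by (auto simp: closure_hemi)
    then show "isCont \<rho> y" using dr has_derivative_continuous by blast
  qed
  obtain x where xS: "x \<in> closure hemi" and xm: "\<forall>y\<in>closure hemi. \<rho> y \<le> \<rho> x"
    using continuous_attains_sup[OF comp ne cont] by blast
  have x: "norm x = 1" "snd x \<ge> 0" using xS by (auto simp: closure_hemi)
  have mx: "\<forall>y. norm y = 1 \<and> snd y \<ge> 0 \<longrightarrow> \<rho> y \<le> \<rho> x" using xm by (auto simp: closure_hemi)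
  define g where "g = sph_grad G x"
  have xx: "x \<bullet> x = 1" using x by (simp add: power2_norm_eq_inner[symmetric])
  have gx: "g \<bullet> x = 0" by (simp add: g_def sph_grad_def inner_diff_left xx)
  have sg: "snd x > 0 \<or> snd g \<ge> 0"
  proof (cases "snd x > 0")
    case False
    then have "x \<in> hemi_bdry" using x by (auto simp: hemi_bdry_def)
    then have "- exp (- \<rho> x) * (g \<bullet> e_last) = c" using P by (simp add: mean_curv_def g_def)
    then have "exp (- \<rho> x) * (g \<bullet> e_last) \<ge> 0" using assms(3) by simp
    then have "g \<bullet> e_last \<ge> 0" by (simp add: zero_le_mult_iff)
    then show ?thesis by (simp add: e_last_def inner_prod_def)
  qed simp
  have g0: "g = 0"
  proof (rule ccontr)
    assume gn: "g \<noteq> 0"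
    define v where "v = (1 / norm g) *\<^sub>R g"
    have ng: "norm g > 0" using gn by simp
    have v: "v \<bullet> x = 0" "norm v = 1" using gx ng by (auto simp: v_def)
    have sv: "snd x > 0 \<or> snd v \<ge> 0" using sg ng by (auto simp: v_def)
    have "G x \<bullet> v \<le> 0" using max_cond[OF U dr dG x mx v sv] by simp
    moreover have "G x = g + (G x \<bullet> x) *\<^sub>R x" by (simp add: g_def sph_grad_def)
    then have "G x \<bullet> v = g \<bullet> v + (G x \<bullet> x) * (x \<bullet> v)"
      by (metis inner_add_left inner_scaleR_left)
    then have "G x \<bullet> v = norm g" using v ng
      by (simp add: v_def inner_commute power2_norm_eq_inner[symmetric] power2_eq_square)
    ultimately show False using ng by simp
  qed
  obtain lam where lam: "sch_eigs \<rho> G H x lam" "f lam = 0" using P xS by blast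
  then obtain b :: "'m \<Rightarrow> 'm pt" where
    b: "\<forall>i. b i \<bullet> x = 0" "\<forall>i j. b i \<bullet> b j = (if i = j then 1 else 0)"
      "\<forall>i. \<forall>w. w \<bullet> x = 0 \<longrightarrow> schouten G H x (b i) w = lam $ i * (exp (2 * \<rho> x) * (b i \<bullet> w))"
    unfolding sch_eigs_def by blast
  have "lam \<in> Gamma_m"
    unfolding Gamma_m_def
  proof (intro CollectI allI)
    fix i
    have bb: "b i \<bullet> b i = 1" using b(2) by simp
    have nb: "norm (b i) = 1" using bb by (simp add: norm_eq_sqrt_inner)
    have hs: "H x (b i) \<bullet> b i - G x \<bullet> x \<le> 0"
      using hess_nonpos[OF U dr dG x mx _ b(1)[rule_format] nb] g0 by (simp add: g_def)
    have "schouten G H x (b i) (b i) = lam $ i * exp (2 * \<rho> x)" 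
    proof -
      have "schouten G H x (b i) (b i) = lam $ i * (exp (2 * \<rho> x) * (b i \<bullet> b i))"
        using b(3) b(1) by blast
      then show ?thesis using bb by simp
    qed
    moreover have "schouten G H x (b i) (b i) = 1/2 - (H x (b i) \<bullet> b i - G x \<bullet> x)"
      using g0 bb by (simp add: schouten_def sph_hess_def g_def)
    ultimately have "lam $ i * exp (2 * \<rho> x) > 0" using hs by linarith
    then show "lam $ i > 0" by (simp add: zero_less_mult_iff)
  qed
  then have "f lam > 0" using ed by blast
  then show False using lam by simp
qed

end
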